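(* Let $X$ be a continuous random variable with absolutely continuous distribution function $F$, density $f$, and reversed hazard rate $\lambda(t)=f(t)/F(t)$. Then for $s>1$ the past entropy generating function satisfies $$\bar B_s(F;t)=(\lambda(t))^{s-1}$$ (for all $t$ in the support) if and only if $X$ is uniformly distributed on $[a,b]$, i.e. $F(x)=\frac{x-a}{b-a}$ for $a\le x\le b$.
   Context: Let $\ell=\inf\{x:F(x)>0\}$. The past entropy generating function is $\bar B_s(F;t)=\int_{\ell}^t\left(\frac{f(x)}{F(t)}\right)^s dx$, $s\ge1$, for $t$ with $F(t)>0$ (for non-negative $X$ this coincides with $\int_0^t (f(x)/F(t))^s dx$). *)

theory Defs
  imports "HOL-Analysis.Analysis"
begin

definition rev_hazard :: "(real \<Rightarrow> real) \<Rightarrow> (real \<Rightarrow> real) \<Rightarrow> real \<Rightarrow> real" where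
  "rev_hazard F f t = f t / F t"

text \<open>Past entropy generating function: integral of (f(x)/F(t))^s over x up to t.
  Since f vanishes a.e. below the left end of the support, integrating over {..t}
  agrees with integrating over [ell, t].\<close>
definition past_egf :: "(real \<Rightarrow> real) \<Rightarrow> (real \<Rightarrow> real) \<Rightarrow> real \<Rightarrow> real \<Rightarrow> real" where
  "past_egf F f s t = (LBINT x:{..t}. (f x / F t) powr s)"

end

theory Submission
  imports Defs
begin


lemma split_int:
  fixes g :: "real \<Rightarrow> real"
  assumes g: "set_integrable lborel {..d} g" and cx: "c \<le> x" and xd: "x \<le> d"
  shows "(LBINT y:{..x}. g y) = (LBINT y:{..c}. g y) + integral {c..x} g"
proof -
  have i1: "set_integrable lborel {..c} g" by (rule set_integrable_subset[OF g]) (use cx xd in auto)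
  have i2: "set_integrable lborel {c<..x} g" by (rule set_integrable_subset[OF g]) (use cx xd in auto)
  have i3: "set_integrable lborel {c..x} g" by (rule set_integrable_subset[OF g]) (use cx xd in auto)
  have "{..x} = {..c} \<union> {c<..x}" using cx by auto
  have "(LBINT y:{..x}. g y) = (LBINT y:{..c}. g y) + (LBINT y:{c<..x}. g y)"
  proof -
    have "{..c} \<inter> {c<..x} = {}" by auto
    from set_integral_Un[OF this i1 i2] \<open>{..x} = _\<close> show ?thesis by simp
  qed
  also have "(LBINT y:{c<..x}. g y) = (LBINT y:{c..x}. g y)"
    using interval_integral_Ioc[of c x g] interval_integral_Icc[of c x g] cx by simp
  also have "\<dots> = integral {c..x} g" using set_borel_integral_eq_integral(2)[OF i3] .
  finally show ?thesis .
qed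

lemma cont_setint:
  fixes g :: "real \<Rightarrow> real"
  assumes g: "set_integrable lborel {..d} g" and ct: "c < t" and td: "t < d"
  shows "isCont (\<lambda>x. LBINT y:{..x}. g y) t"
proof -
  have i3: "set_integrable lborel {c..d} g" by (rule set_integrable_subset[OF g]) auto
  have "continuous_on {c..d} (\<lambda>x. (LBINT y:{..c}. g y) + integral {c..x} g)"
    by (intro continuous_intros indefinite_integral_continuous_1 set_borel_integral_eq_integral(1)[OF i3])
  then have "continuous_on {c..d} (\<lambda>x. LBINT y:{..x}. g y)"
    by (rule continuous_on_eq) (use split_int[OF g] in auto)
  then show ?thesis
    using ct td by (metis continuous_on_interior greaterThanLessThan_iff interior_atLeastAtMost_real)
qed



lemma R_right:
  fixes F :: "real \<Rightarrow> real" and k t :: real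
  assumes cont: "\<And>x. isCont F x" and mono: "\<And>x y. x \<le> y \<Longrightarrow> F x \<le> F y"
    and le1: "\<And>x. F x \<le> 1" and lim: "(F \<longlongrightarrow> 1) at_top"
    and t0: "0 < F t" and t1: "F t < 1"
    and H: "\<And>x. t \<le> x \<Longrightarrow> 0 < F x \<Longrightarrow> F x < 1 \<Longrightarrow> F x = F t + k * (x - t)"
  shows "k > 0 \<and> (\<forall>x. t \<le> x \<and> x \<le> t + (1 - F t) / k \<longrightarrow> F x = F t + k * (x - t))"
proof -
  define U where "U = {x. t \<le> x \<and> 1 \<le> F x}"
  have H2: "F x = F t + k * (x - t)" if "t \<le> x" "x \<notin> U" for x
  proof -
    have "F t \<le> F x" using mono that by auto
    moreover have "F x < 1" using that by (auto simp: U_def)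
    ultimately show ?thesis using H[of x] that t0 by linarith
  qed
  show ?thesis
  proof (cases "U = {}")
    case True
    show ?thesis
    proof (cases "k > 0")
      case True
      define x where "x = t + (1 - F t) / k"
      have "t \<le> x" using True t1 by (simp add: x_def)
      have "F x = F t + k * (x - t)" using H2[of x] \<open>U = {}\<close> \<open>t \<le> x\<close> by blast
      also have "\<dots> = 1" using True by (simp add: x_def)
      finally have "F x = 1" .
      then have "x \<in> U" using \<open>t \<le> x\<close> by (simp add: U_def)
      then show ?thesis using \<open>U = {}\<close> by auto
    next
      case False
      have "eventually (\<lambda>x. F x \<le> F t) at_top"
        using eventually_ge_at_top[of t]
      proof eventually_elim
        case (elim x)
        then have "F x = F t + k * (x - t)" using H2[of x] \<open>U = {}\<close> by blast
        moreover have "k * (x - t) \<le> 0" using False elim by (simp add: mult_nonpos_nonneg)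
        ultimately show ?case by linarith
      qed
      then have "1 \<le> F t" using tendsto_upperbound[OF lim] by auto
      then show ?thesis using t1 by auto
    qed
  next
    case False
    have bdd: "bdd_below U" unfolding U_def by (rule bdd_belowI[of _ t]) auto
    have clo: "closed U"
    proof -
      have cF: "continuous_on UNIV F" using cont by (simp add: continuous_at_imp_continuous_on)
      have "closed ({x. t \<le> x} \<inter> {x. 1 \<le> F x})"
        by (intro closed_Int closed_Collect_le[OF continuous_on_const continuous_on_id] closed_Collect_le[OF continuous_on_const cF])
      moreover have "U = {x. t \<le> x} \<inter> {x. 1 \<le> F x}" by (auto simp: U_def)
      ultimately show ?thesis by simp
    qed
    define \<beta> where "\<beta> = Inf U"
    have bU: "\<beta> \<in> U" unfolding \<beta>_def using closed_contains_Inf[OF False bdd clo] .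
    have tb1: "t \<le> \<beta>" "1 \<le> F \<beta>" using bU by (auto simp: U_def)
    have tb: "t < \<beta>" using tb1 t1 by (cases "t = \<beta>") auto
    have below: "x \<notin> U" if "x < \<beta>" for x
    proof
      assume "x \<in> U"
      then have "Inf U \<le> x" by (rule cInf_lower[OF _ bdd])
      then show False using that unfolding \<beta>_def by simp
    qed
    have l1: "(F \<longlongrightarrow> F \<beta>) (at_left \<beta>)"
    proof -
      have "(F \<longlongrightarrow> F \<beta>) (at \<beta>)" using cont[of \<beta>] isCont_def by blast
      then show ?thesis using filterlim_at_split by blast
    qed
    have ev: "eventually (\<lambda>x. F t + k * (x - t) = F x) (at_left \<beta>)"
    proof -
      have "eventually (\<lambda>x. x \<in> {t<..<\<beta>}) (at_left \<beta>)" by (rule eventually_at_left_real[OF tb])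
      then show ?thesis
      proof eventually_elim
        case (elim x)
        have "F x = F t + k * (x - t)" by (rule H2) (use elim below[of x] in auto)
        then show ?case by (rule sym)
      qed
    qed
    have l2: "((\<lambda>x. F t + k * (x - t)) \<longlongrightarrow> F t + k * (\<beta> - t)) (at_left \<beta>)"
      by (intro tendsto_intros tendsto_ident_at)
    have "F \<beta> = F t + k * (\<beta> - t)"
      using tendsto_unique[OF trivial_limit_at_left_real l1 tendsto_cong[OF ev, THEN iffD1, OF l2]] by simp
    moreover have "F \<beta> = 1" using bU le1[of \<beta>] by (auto simp: U_def)
    ultimately have eq: "F t + k * (\<beta> - t) = 1" by simp
    then have "k * (\<beta> - t) > 0" using t1 by linarith
    then have kpos: "k > 0" using tb by (simp add: zero_less_mult_iff)
    have bval: "\<beta> = t + (1 - F t) / k" using eq kpos by (simp add: field_simps)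
    have "F x = F t + k * (x - t)" if "t \<le> x" "x \<le> t + (1 - F t) / k" for x
    proof (cases "x < \<beta>")
      case True then show ?thesis using H2[of x] below[of x] that by blast
    next
      case False then have "x = \<beta>" using that bval by auto
      then show ?thesis using eq \<open>F \<beta> = 1\<close> by simp
    qed
    then show ?thesis using kpos by blast
  qed
qed



context
  fixes F f :: "real \<Rightarrow> real"
  assumes f_nonneg: "\<And>x. f x \<ge> 0"
    and f_int: "integrable lborel f"
    and f_total: "(LBINT x. f x) = 1"
    and F_def: "\<And>x. F x = (LBINT y:{..x}. f y)"
begin

lemma Fint: "A \<in> sets lborel \<Longrightarrow> set_integrable lborel A f"
  unfolding set_integrable_def by (rule integrable_mult_indicator[OF _ f_int])

lemma F_nonneg: "F x \<ge> 0"
  unfolding F_def set_lebesgue_integral_def using f_nonneg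
  by (intro Bochner_Integration.integral_nonneg) (simp add: indicator_def)

lemma F_le1: "F x \<le> 1"
proof -
  have "F x \<le> (LBINT x. f x)"
    unfolding F_def set_lebesgue_integral_def
    by (intro integral_mono integrable_mult_indicator f_int) (auto simp: indicator_def f_nonneg)
  then show ?thesis using f_total by simp
qed

lemma F_mono: "x \<le> y \<Longrightarrow> F x \<le> F y"
proof -
  assume xy: "x \<le> y"
  have i: "set_integrable lborel {..y} f" by (rule Fint) simp
  have "F y = F x + integral {x..y} f" unfolding F_def using split_int[OF i xy order.refl] .
  moreover have "0 \<le> integral {x..y} f"
  proof (rule Henstock_Kurzweil_Integration.integral_nonneg)
    show "f integrable_on {x..y}" by (rule set_borel_integral_eq_integral(1)[OF Fint]) simp
  qed (rule f_nonneg)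
  ultimately show ?thesis by simp
qed

lemma F_cont: "isCont F x"
proof -
  have i: "set_integrable lborel {..x+1} f" by (rule Fint) simp
  have "F = (\<lambda>x. LBINT y:{..x}. f y)" using F_def by auto
  then show ?thesis using cont_setint[OF i, of "x - 1" x] by simp
qed

lemma F_top: "(F \<longlongrightarrow> 1) at_top"
proof -
  have "F = (\<lambda>y. \<integral> x. indicator {.. y} x *\<^sub>R f x \<partial>lborel)"
    using F_def by (auto simp: set_lebesgue_integral_def)
  then show ?thesis using tendsto_integral_at_top[of lborel f] f_int f_total by simp
qed

lemma F_bot: "(F \<longlongrightarrow> 0) at_bot"
proof -
  have "((\<lambda>t. \<integral> x. indicator {..-t} x *\<^sub>R f x \<partial>lborel) \<longlongrightarrow> (integral\<^sup>L (lborel::real measure) (\<lambda>x. 0::real))) at_top"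
  proof (rule integral_dominated_convergence_at_top[where s="\<lambda>t x. indicator {..-t} x *\<^sub>R f x" and w=f and f="\<lambda>x. 0" and M=lborel])
    show "AE x in lborel. ((\<lambda>t. indicator {..-t} x *\<^sub>R f x) \<longlongrightarrow> 0) at_top"
    proof (rule AE_I2)
      fix x :: real
      have "eventually (\<lambda>t. indicator {..-t} x *\<^sub>R f x = 0) at_top"
        using eventually_gt_at_top[of "-x"] by eventually_elim (auto simp: indicator_def)
      then show "((\<lambda>t. indicator {..-t} x *\<^sub>R f x) \<longlongrightarrow> 0) at_top"
        by (rule tendsto_eventually)
    qed
    show "\<forall>\<^sub>F i in at_top. AE x in lborel. norm (indicator {..-i} x *\<^sub>R f x) \<le> f x"
      by (intro always_eventually allI AE_I2) (auto simp: indicator_def f_nonneg)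
  qed (use f_int in auto)
  then have "((\<lambda>t. F (-t)) \<longlongrightarrow> 0) at_top"
    using F_def by (simp add: set_lebesgue_integral_def)
  then show ?thesis by (simp add: filterlim_at_bot_mirror)
qed

end


lemma lin:
  fixes F :: "real \<Rightarrow> real"
  assumes ab: "a \<le> b" and d: "\<And>y. a \<le> y \<Longrightarrow> y \<le> b \<Longrightarrow> (F has_real_derivative k) (at y)"
  shows "F b = F a + k * (b - a)"
proof (cases "a = b")
  case True then show ?thesis by simp
next
  case False
  then have ab': "a < b" using ab by simp
  define \<phi> where "\<phi> y = F y - k * y" for y
  have "continuous_on {a..b} \<phi>"
    unfolding \<phi>_def
    by (intro continuous_intros continuous_at_imp_continuous_on ballI DERIV_isCont[OF d]) auto
  moreover have "DERIV \<phi> y :> 0" if "a < y" "y < b" for y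
  proof -
    have "DERIV \<phi> y :> k - k * 1" unfolding \<phi>_def
      by (intro derivative_intros d) (use that in auto)
    then show ?thesis by simp
  qed
  ultimately have "\<phi> b = \<phi> a" using DERIV_isconst2[OF ab'] ab' by auto
  then show ?thesis unfolding \<phi>_def by (simp add: algebra_simps)
qed



theorem theorem3p2:
  fixes F f :: "real \<Rightarrow> real" and s :: real
  assumes s_gt: "s > 1"
    and f_nonneg: "\<And>x. f x \<ge> 0"
    and f_meas: "f \<in> borel_measurable lborel"
    and f_int: "integrable lborel f"
    and f_total: "(LBINT x. f x) = 1"
    and F_def: "\<And>x. F x = (LBINT y:{..x}. f y)"
    and f_deriv: "\<And>t. 0 < F t \<Longrightarrow> F t < 1 \<Longrightarrow> (F has_real_derivative f t) (at t)"
  shows "(\<forall>t. 0 < F t \<and> F t < 1 \<longrightarrow> past_egf F f s t = rev_hazard F f t powr (s - 1))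
         \<longleftrightarrow> (\<exists>a b. a < b \<and> (\<forall>x\<in>{a..b}. F x = (x - a) / (b - a)))"
proof -
  note Fc = F_cont[OF f_nonneg f_int f_total F_def]
  note Fm = F_mono[OF f_nonneg f_int f_total F_def]
  note F0 = F_nonneg[OF f_nonneg f_int f_total F_def]
  note F1 = F_le1[OF f_nonneg f_int f_total F_def]
  note Ftop = F_top[OF f_nonneg f_int f_total F_def]
  note Fbot = F_bot[OF f_nonneg f_int f_total F_def]
  note Fint = Fint[OF f_nonneg f_int f_total F_def]
  note [measurable] = f_meas
  define S where "S = {t. 0 < F t \<and> F t < 1}"
  define g where "g x = f x powr s" for x
  define G where "G t = (LBINT x:{..t}. g x)" for t
  have gnn: "g x \<ge> 0" for x unfolding g_def by simp
  have key: "past_egf F f s t = rev_hazard F f t powr (s - 1) \<longleftrightarrow> G t = f t powr (s - 1) * F t"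
    if "t \<in> S" for t
  proof -
    have Ft: "F t > 0" using that by (simp add: S_def)
    have "past_egf F f s t = (LBINT x:{..t}. g x / F t powr s)"
      unfolding past_egf_def g_def using Ft f_nonneg by (simp add: powr_divide)
    also have "\<dots> = G t / F t powr s"
    proof -
      have "(\<lambda>x. indicator {..t} x *\<^sub>R (g x / F t powr s)) = (\<lambda>x. (indicator {..t} x *\<^sub>R g x) / F t powr s)"
        by auto
      then show ?thesis unfolding G_def set_lebesgue_integral_def by simp
    qed
    finally have pe: "past_egf F f s t = G t / F t powr s" .
    have rh: "rev_hazard F f t powr (s - 1) = f t powr (s - 1) / F t powr (s - 1)"
      unfolding rev_hazard_def using Ft f_nonneg by (simp add: powr_divide)
    have Fs: "F t powr s = F t powr (s - 1) * F t"
      using powr_add[of "F t" "s - 1" 1] Ft by simp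
    have p1: "F t powr (s - 1) > 0" using Ft by simp
    show ?thesis unfolding pe rh Fs using p1 Ft by (auto simp: field_simps)
  qed
  show ?thesis
  proof
    assume L: "\<forall>t. 0 < F t \<and> F t < 1 \<longrightarrow> past_egf F f s t = rev_hazard F f t powr (s - 1)"
    have Hyp: "G t = f t powr (s - 1) * F t" if "t \<in> S" for t
      using L key[OF that] that by (auto simp: S_def)
    have Scont: "continuous_on UNIV F" using Fc by (simp add: continuous_at_imp_continuous_on)
    have Sopen: "open S"
    proof -
      have "S = {t. 0 < F t} \<inter> {t. F t < 1}" by (auto simp: S_def)
      moreover have "open {t. 0 < F t}" by (rule open_Collect_less[OF continuous_on_const Scont])
      moreover have "open {t. F t < 1}" by (rule open_Collect_less[OF Scont continuous_on_const])
      ultimately show ?thesis by auto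
    qed
    have Sconv: "z \<in> S" if "x \<in> S" "y \<in> S" "x \<le> z" "z \<le> y" for x y z
      using that Fm[of x z] Fm[of z y] by (auto simp: S_def)
    have Sball: "\<exists>e>0. {y - e..y + e} \<subseteq> S" if yS: "y \<in> S" for y
    proof -
      obtain e where e: "e > 0" "ball y e \<subseteq> S" using openE[OF Sopen yS] by blast
      have "{y - e/2..y + e/2} \<subseteq> ball y e"
      proof
        fix z assume "z \<in> {y - e/2..y + e/2}"
        then have "dist y z < e" using e(1) unfolding dist_real_def by (simp add: abs_less_iff)
        then show "z \<in> ball y e" by simp
      qed
      then have "{y - e/2..y + e/2} \<subseteq> S" using e(2) by (rule order.trans)
      then show ?thesis using e(1) by (intro exI[of _ "e/2"]) simp
    qed
    have lin2: "F x = F t + k * (x - t)" if "t \<in> S" "x \<in> S" "\<And>y. y \<in> S \<Longrightarrow> f y = k" for t x k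
    proof -
      have d: "(F has_real_derivative k) (at y)" if "y \<in> S" for y
        using f_deriv[of y] that \<open>\<And>y. y \<in> S \<Longrightarrow> f y = k\<close>[of y] by (auto simp: S_def)
      show ?thesis
      proof (cases "t \<le> x")
        case True
        show ?thesis by (rule lin[OF True]) (rule d, use Sconv \<open>t \<in> S\<close> \<open>x \<in> S\<close> in blast)
      next
        case False
        have "F t = F x + k * (t - x)"
          by (rule lin) (use False in simp, rule d, use Sconv \<open>t \<in> S\<close> \<open>x \<in> S\<close> in blast)
        then show ?thesis by (simp add: algebra_simps)
      qed
    qed
    obtain t0 where t0: "t0 \<in> S"
    proof -
      have "eventually (\<lambda>x. F x < 1/2) at_bot" using Fbot by (rule order_tendstoD) simp
      then obtain x0 where x0: "F x0 < 1/2" by (auto simp: eventually_at_bot_linorder)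
      have "eventually (\<lambda>x. F x > 1/2) at_top" using Ftop by (rule order_tendstoD) simp
      then obtain x1 where x1: "F x1 > 1/2" by (auto simp: eventually_at_top_linorder)
      have x01: "x0 \<le> x1"
      proof (rule ccontr)
        assume "\<not> x0 \<le> x1"
        then have "F x1 \<le> F x0" using Fm[of x1 x0] by simp
        then show False using x0 x1 by simp
      qed
      have "\<exists>x\<ge>x0. x \<le> x1 \<and> F x = 1/2"
        by (rule IVT) (use x0 x1 x01 Fc in auto)
      then obtain t where "F t = 1/2" by blast
      then show thesis using that[of t] by (simp add: S_def)
    qed
    have integ: "set_integrable lborel {..t} g" if tS: "t \<in> S" for t
    proof (rule ccontr)
      assume ni: "\<not> set_integrable lborel {..t} g"
      have f0: "f x = 0" if xS: "x \<in> S" and tx: "t \<le> x" for x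
      proof -
        have "\<not> set_integrable lborel {..x} g"
          using ni set_integrable_subset[of lborel "{..x}" g "{..t}"] tx by auto
        then have "G x = 0" unfolding G_def set_lebesgue_integral_def set_integrable_def
          by (rule not_integrable_integral_eq)
        then have "f x powr (s - 1) * F x = 0" using Hyp[OF xS] by simp
        then show ?thesis using xS by (simp add: S_def)
      qed
      have H0: "F x = F t + 0 * (x - t)" if tx: "t \<le> x" and x0: "0 < F x" and x1: "F x < 1" for x
      proof -
        have xS: "x \<in> S" using x0 x1 by (simp add: S_def)
        show ?thesis
        proof (rule lin[OF tx])
          fix y assume y: "t \<le> y" "y \<le> x"
          then have yS: "y \<in> S" using Sconv[OF tS xS] by blast
          then have "(F has_real_derivative f y) (at y)" using f_deriv by (simp add: S_def)
          then show "(F has_real_derivative 0) (at y)" using f0[OF yS y(1)] by simp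
        qed
      qed
      have "(0::real) > 0"
        using R_right[OF Fc Fm F1 Ftop, of t 0] H0 tS by (auto simp: S_def)
      then show False by simp
    qed
    have Gcont: "isCont G y" if yS: "y \<in> S" for y
    proof -
      obtain e where e: "e > 0" "{y - e..y + e} \<subseteq> S" using Sball[OF yS] by blast
      have "y + e \<in> S" using e by auto
      from cont_setint[OF integ[OF this], of "y - 1" y] e(1)
      show ?thesis unfolding G_def[abs_def] by simp
    qed
    define q where "q y = G y / F y" for y
    have qf: "q y = f y powr (s - 1)" if yS: "y \<in> S" for y
      using Hyp[OF yS] yS by (simp add: q_def S_def)
    have fq: "f y = q y powr (1 / (s - 1))" if yS: "y \<in> S" for y
      using qf[OF yS] s_gt f_nonneg[of y] by (simp add: powr_powr)
    have fcont: "isCont f y" if yS: "y \<in> S" for y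
    proof -
      have Fy: "F y \<noteq> 0" using yS by (simp add: S_def)
      have qc: "isCont q y" unfolding q_def[abs_def]
        using Gcont[OF yS] Fc[of y] Fy by (intro continuous_intros) auto
      have ev: "eventually (\<lambda>x. x \<in> S) (nhds y)" by (rule eventually_nhds_in_open[OF Sopen yS])
      have "eventually (\<lambda>x. x \<in> S) (at y)" by (rule eventually_at_in_open'[OF Sopen yS])
      then have qnn: "eventually (\<lambda>x. q x \<ge> 0) (at y)"
        by eventually_elim (simp add: qf)
      have "((\<lambda>x. q x powr (1 / (s - 1))) \<longlongrightarrow> q y powr (1 / (s - 1))) (at y)"
        by (rule tendsto_powr'[OF qc[unfolded isCont_def] tendsto_const]) (use qnn s_gt in auto)
      then have c: "isCont (\<lambda>x. q x powr (1 / (s - 1))) y" by (simp add: isCont_def)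
      have ev2: "eventually (\<lambda>x. f x = q x powr (1 / (s - 1))) (nhds y)"
        using ev by eventually_elim (rule fq)
      show ?thesis using isCont_cong[OF ev2] c by simp
    qed
    have gcont: "isCont g y" if yS: "y \<in> S" for y
    proof -
      have "((\<lambda>x. f x powr s) \<longlongrightarrow> f y powr s) (at y)"
        by (rule tendsto_powr'[OF fcont[OF yS, unfolded isCont_def] tendsto_const]) (use s_gt f_nonneg in auto)
      then show ?thesis unfolding g_def[abs_def] isCont_def by simp
    qed
    have Gder: "(G has_real_derivative g y) (at y)" if yS: "y \<in> S" for y
    proof -
      obtain e where e: "e > 0" "{y - e..y + e} \<subseteq> S" using Sball[OF yS] by blast
      have ye: "y + e \<in> S" using e by auto
      have gc: "continuous_on {y - e..y + e} g"
        using e(2) gcont by (intro continuous_at_imp_continuous_on) auto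
      have "((\<lambda>x. integral {y - e..x} g) has_real_derivative g y) (at y within {y - e..y + e})"
        by (rule integral_has_real_derivative[OF gc]) (use e in auto)
      moreover have "at y within {y - e..y + e} = at y" by (rule at_within_Icc_at) (use e in auto)
      ultimately have D: "((\<lambda>x. integral {y - e..x} g) has_real_derivative g y) (at y)" by simp
      have D2: "((\<lambda>x. G (y - e) + integral {y - e..x} g) has_real_derivative g y) (at y)"
        using DERIV_add[OF DERIV_const D] by simp
      show ?thesis
      proof (rule has_field_derivative_transform_within_open[OF D2, of "{y - e<..<y + e}"])
        fix x assume "x \<in> {y - e<..<y + e}"
        then show "G (y - e) + integral {y - e..x} g = G x"
          using split_int[OF integ[OF ye], of "y - e" x] unfolding G_def by simp
      qed (use e in auto)
    qed
    have qder: "(q has_real_derivative 0) (at y)" if yS: "y \<in> S" for y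
    proof -
      have Fy: "F y \<noteq> 0" using yS by (simp add: S_def)
      have dF: "(F has_real_derivative f y) (at y)" using f_deriv yS by (simp add: S_def)
      have gy: "g y = f y powr (s - 1) * f y"
        using powr_add[of "f y" "s - 1" 1] f_nonneg[of y] by (simp add: g_def)
      have num: "g y * F y - G y * f y = 0" using gy Hyp[OF yS] by simp
      have "((\<lambda>x. G x / F x) has_real_derivative (g y * F y - G y * f y) / (F y * F y)) (at y)"
        by (rule DERIV_divide[OF Gder[OF yS] dF Fy])
      then show ?thesis unfolding q_def[abs_def] num by simp
    qed
    have qeq: "q b = q a" if aS: "a \<in> S" and bS: "b \<in> S" and ab: "a < b" for a b
    proof -
      have "continuous_on {a..b} q"
        by (intro continuous_at_imp_continuous_on ballI DERIV_isCont[OF qder])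
           (use Sconv[OF aS bS] in auto)
      then show ?thesis
        by (rule DERIV_isconst2[OF ab _ _ order.strict_implies_order[OF ab] order.refl])
           (rule qder, use Sconv[OF aS bS] in auto)
    qed
    have qconst: "q y = q t0" if yS: "y \<in> S" for y
    proof (cases "t0 < y")
      case True then show ?thesis using qeq[OF t0 yS] by simp
    next
      case False
      then show ?thesis using qeq[OF yS t0] by (cases "y = t0") auto
    qed
    define k where "k = f t0"
    have fk: "f y = k" if "y \<in> S" for y
      using fq[OF that] fq[OF t0] qconst[OF that] by (simp add: k_def)
    have Flin: "F x = F t0 + k * (x - t0)" if "x \<in> S" for x
      using lin2[OF t0 that fk] .
    have t0p: "0 < F t0" "F t0 < 1" using t0 by (auto simp: S_def)
    have Rr: "k > 0 \<and> (\<forall>x. t0 \<le> x \<and> x \<le> t0 + (1 - F t0) / k \<longrightarrow> F x = F t0 + k * (x - t0))"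
    proof (rule R_right[OF Fc Fm F1 Ftop t0p])
      fix x assume "t0 \<le> x" "0 < F x" "F x < 1"
      then have "x \<in> S" by (simp add: S_def)
      then show "F x = F t0 + k * (x - t0)" by (rule Flin)
    qed
    define F2 where "F2 x = 1 - F (- x)" for x
    have F2c: "isCont F2 x" for x
    proof -
      have "isCont (\<lambda>x. F (- x)) x" by (rule isCont_o2[OF _ Fc]) (intro continuous_intros)
      then show ?thesis unfolding F2_def[abs_def] by (intro continuous_intros)
    qed
    have F2m: "F2 x \<le> F2 y" if "x \<le> y" for x y
      using Fm[of "-y" "-x"] that by (simp add: F2_def)
    have F21: "F2 x \<le> 1" for x using F0[of "-x"] by (simp add: F2_def)
    have F2top: "(F2 \<longlongrightarrow> 1) at_top"
    proof -
      have "((\<lambda>x. F (- x)) \<longlongrightarrow> 0) at_top" using Fbot by (simp add: filterlim_at_bot_mirror)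
      from tendsto_diff[OF tendsto_const this, of 1] show ?thesis unfolding F2_def[abs_def] by simp
    qed
    have F2t: "0 < F2 (- t0)" "F2 (- t0) < 1" using t0p by (auto simp: F2_def)
    have Rl: "k > 0 \<and> (\<forall>x. - t0 \<le> x \<and> x \<le> - t0 + (1 - F2 (- t0)) / k \<longrightarrow> F2 x = F2 (- t0) + k * (x - - t0))"
    proof (rule R_right[OF F2c F2m F21 F2top F2t])
      fix x assume "- t0 \<le> x" "0 < F2 x" "F2 x < 1"
      then have "- x \<in> S" by (auto simp: S_def F2_def)
      from Flin[OF this] show "F2 x = F2 (- t0) + k * (x - - t0)" by (simp add: F2_def algebra_simps)
    qed
    have kp: "k > 0" using Rr by blast
    define a where "a = t0 - F t0 / k"
    define b where "b = t0 + (1 - F t0) / k"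
    have ba: "b - a = 1 / k" using kp by (simp add: a_def b_def field_simps)
    have "0 < 1 / k" using kp by simp
    then have "a < b" using ba by linarith
    moreover have "F x = (x - a) / (b - a)" if x: "x \<in> {a..b}" for x
    proof -
      have "F x = F t0 + k * (x - t0)"
      proof (cases "t0 \<le> x")
        case True
        have "t0 \<le> x \<and> x \<le> t0 + (1 - F t0) / k" using True x by (simp add: b_def)
        then show ?thesis using Rr by blast
      next
        case False
        then have "- t0 \<le> - x \<and> - x \<le> - t0 + (1 - F2 (- t0)) / k"
          using x by (simp add: a_def F2_def)
        then have "F2 (- x) = F2 (- t0) + k * (- x - - t0)" using Rl by blast
        then show ?thesis by (simp add: F2_def algebra_simps)
      qed
      also have "\<dots> = (x - a) / (b - a)" unfolding ba using kp by (simp add: a_def field_simps)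
      finally show ?thesis .
    qed
    ultimately show "\<exists>a b. a < b \<and> (\<forall>x\<in>{a..b}. F x = (x - a) / (b - a))" by blast
  next
    assume "\<exists>a b. a < b \<and> (\<forall>x\<in>{a..b}. F x = (x - a) / (b - a))"
    then obtain a b where ab: "a < b" and lin: "\<And>x. x \<in> {a..b} \<Longrightarrow> F x = (x - a) / (b - a)" by blast
    have Sab: "a < t \<and> t < b" if "t \<in> S" for t
    proof -
      have Fa: "F a = 0" using lin[of a] ab by simp
      have Fb: "F b = 1" using lin[of b] ab by simp
      have "\<not> t \<le> a" using Fm[of t a] Fa that by (auto simp: S_def)
      moreover have "\<not> b \<le> t" using Fm[of b t] Fb that by (auto simp: S_def)
      ultimately show ?thesis by simp
    qed
    define c where "c = 1 / (b - a)"
    have fc: "f y = c" if "a < y" "y < b" for y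
    proof -
      have Fy: "F y = (y - a) / (b - a)" using lin[of y] that by simp
      have yS: "0 < F y \<and> F y < 1" unfolding Fy using that by (auto simp: field_simps)
      have d1: "(F has_real_derivative f y) (at y)" using f_deriv yS by blast
      have d2: "((\<lambda>x. (x - a) / (b - a)) has_real_derivative 1 / (b - a)) (at y)"
        using DERIV_cdivide[OF DERIV_diff[OF DERIV_ident DERIV_const[of a]], of "b - a" y] by simp
      have d3: "(F has_real_derivative 1 / (b - a)) (at y)"
        by (rule has_field_derivative_transform_within_open[OF d2, of "{a<..<b}"]) (use that lin in auto)
      show ?thesis using DERIV_unique[OF d1 d3] by (simp add: c_def)
    qed
    have Fa: "F a = 0" using lin[of a] ab by simp
    have AE0: "AE x in lborel. indicator {..a} x * f x = 0"
    proof -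
      have "integral\<^sup>L lborel (\<lambda>x. indicator {..a} x * f x) = 0"
        using Fa F_def[of a] by (simp add: set_lebesgue_integral_def)
      moreover have "integrable lborel (\<lambda>x. indicator {..a} x * f x)"
        using Fint[of "{..a}"] by (simp add: set_integrable_def)
      ultimately show ?thesis
        using integral_nonneg_eq_0_iff_AE[of lborel "\<lambda>x. indicator {..a} x * f x"] f_nonneg
        by (simp add: indicator_def)
    qed
    show "\<forall>t. 0 < F t \<and> F t < 1 \<longrightarrow> past_egf F f s t = rev_hazard F f t powr (s - 1)"
    proof (intro allI impI)
      fix t assume tS': "0 < F t \<and> F t < 1"
      then have tS: "t \<in> S" by (simp add: S_def)
      have at: "a < t" "t < b" using Sab[OF tS] by auto
      have Ft: "F t = (t - a) / (b - a)" using lin[of t] at by simp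
      have ft: "f t = c" using fc at by simp
      have aeq: "AE x in lborel. indicator {..t} x *\<^sub>R g x = indicator {a<..t} x * c powr s"
        using AE0
      proof eventually_elim
        case (elim x)
        show ?case
        proof (cases "x \<le> a")
          case True
          then have "f x = 0" using elim by simp
          then show ?thesis using True at by (simp add: g_def indicator_def)
        next
          case False
          then show ?thesis using fc[of x] at by (auto simp: g_def indicator_def)
        qed
      qed
      have "G t = integral\<^sup>L lborel (\<lambda>x. indicator {a<..t} x * c powr s)"
        unfolding G_def set_lebesgue_integral_def by (rule integral_cong_AE[OF _ _ aeq]) (simp_all add: g_def)
      also have "\<dots> = (t - a) * c powr s"
        using at by simp
      also have "\<dots> = f t powr (s - 1) * F t"
      proof -
        have cp: "c > 0" using ab by (simp add: c_def)
        have "c powr s = c powr (s - 1) * c" using powr_add[of c "s - 1" 1] cp by simp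
        then show ?thesis unfolding ft Ft using cp by (simp add: c_def field_simps)
      qed
      finally show "past_egf F f s t = rev_hazard F f t powr (s - 1)" using key[OF tS] by simp
    qed
  qed
qed

end
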